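(* There exist nonnegative functions $f_n, g_n \in L_1(\mathbb{T})$, $n \in \mathbb{N}$, with $\log f_n, \log g_n \in L_1(\mathbb{T})$ (so that their spectral factors $f_n^+, g_n^+$ are defined), such that $$ \|f_n\|_{L_1}\le 1,\quad \|g_n\|_{L_1} \le 1, \quad \|g_n - f_n\|_{L_1} \le \frac1n, \quad \|\log g_n - \log f_n\|_{L_1} \le \frac1n, $$ but $$ \|g_n^+ - f_n^+\|_{H_2} \ge 2 - \frac1n . $$
   Context: $\mathbb{T}$ is the unit circle, parametrized by $e^{i\vartheta}$, $\vartheta\in[-\pi,\pi)$. Norms are unnormalized: $\|h\|_{L_1}=\int_{-\pi}^{\pi}|h(e^{i\vartheta})|\,d\vartheta$, and for $F$ in the Hardy space $H_2(\mathbb{D})$, $\|F\|_{H_2}^2=\int_{-\pi}^{\pi}|F(e^{i\vartheta})|^2\,d\vartheta$, where $F(e^{i\vartheta})$ denotes the a.e. radial boundary values. For a nonnegative $f\in L_1(\mathbb{T})$ with $\log f\in L_1(\mathbb{T})$, its spectral factor is the outer function $$ f^+(z)=\exp\left(\frac 1{4\pi}\int_0^{2\pi}\frac{e^{i\theta}+z}{e^{i\theta}-z}\log f(e^{i\theta})\,d\theta\right),\quad |z|<1, $$ which belongs to $H_2(\mathbb{D})$, is positive at the origin, and satisfies $|f^+|^2=f$ a.e. on $\mathbb{T}$. *)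

theory Defs
  imports "HOL-Analysis.Analysis"
begin

text \<open>Functions on the unit circle T are modelled as functions on complex numbers,
  evaluated only at points cis t; h(e^{it}) is h (cis t).\<close>

definition L1_T :: "(complex \<Rightarrow> real) \<Rightarrow> bool" where
  "L1_T h \<longleftrightarrow> set_integrable lborel {-pi..pi} (\<lambda>t. h (cis t))"

definition L1_norm :: "(complex \<Rightarrow> real) \<Rightarrow> real" where
  "L1_norm h = (LINT t:{-pi..pi}|lborel. \<bar>h (cis t)\<bar>)"

text \<open>Admissible spectral densities: nonnegative, in L1, with log in L1
  (in particular positive almost everywhere, so log is the genuine logarithm a.e.).\<close>
definition admissible :: "(complex \<Rightarrow> real) \<Rightarrow> bool" where
  "admissible f \<longleftrightarrow> (\<forall>t. 0 \<le> f (cis t)) \<and> L1_T f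
     \<and> (AE t in lborel. t \<in> {-pi..pi} \<longrightarrow> 0 < f (cis t))
     \<and> L1_T (\<lambda>z. ln (f z))"

definition spectral_factor :: "(complex \<Rightarrow> real) \<Rightarrow> complex \<Rightarrow> complex" where
  "spectral_factor f z = exp (complex_of_real (1 / (4 * pi)) *
      (LINT t:{0..2*pi}|lborel. ((cis t + z) / (cis t - z)) * complex_of_real (ln (f (cis t)))))"

definition boundary_value :: "(complex \<Rightarrow> complex) \<Rightarrow> real \<Rightarrow> complex" where
  "boundary_value F t = Lim (at_left 1) (\<lambda>r::real. F (complex_of_real r * cis t))"

definition H2_norm :: "(complex \<Rightarrow> complex) \<Rightarrow> real" where
  "H2_norm F = sqrt (LINT t:{-pi..pi}|lborel. (cmod (boundary_value F t))\<^sup>2)"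

end

theory Submission
  imports Defs "HOL-Complex_Analysis.Complex_Analysis"
begin


lemma cauchy_circle:
  assumes "f holomorphic_on cball 0 1" "norm w < 1"
  shows "((\<lambda>t. f (cis t) / (cis t - w) * \<i> * cis t) has_integral (2*pi*\<i>*f w)) {0..2*pi}"
proof -
  have "((\<lambda>u. f u/(u-w)) has_contour_integral (2 * of_real pi * \<i> * f w)) (circlepath 0 1)"
    using Cauchy_integral_circlepath_simple[OF assms(1)] assms(2) by simp
  hence "((\<lambda>u. f u/(u-w)) has_contour_integral (2 * of_real pi * \<i> * f w)) (part_circlepath 0 1 0 (2*pi))"
    by (simp add: circlepath_def)
  hence "((\<lambda>t. f (0 + 1 * cis t)/((0 + 1 * cis t)-w) * 1 * \<i> * cis t) has_integral (2 * of_real pi * \<i> * f w)) {0..2*pi}"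
    using has_contour_integral_part_circlepath_iff[of 0 "2*pi"] by simp
  thus ?thesis by simp
qed

lemma shift_pi:
  fixes h :: "real \<Rightarrow> complex"
  assumes "(h has_integral I) {0..2*pi}"
  shows "((\<lambda>x. h (x + pi)) has_integral I) {-pi..pi}"
proof -
  have "((\<lambda>x. h (1 *\<^sub>R x + pi)) has_integral (I /\<^sub>R 1 ^ DIM(real))) (cbox ((0 - pi) /\<^sub>R 1) ((2*pi - pi) /\<^sub>R 1))"
    by (rule has_integral_affinity') (use assms in auto)
  thus ?thesis by simp
qed

lemma one_minus_ne:
  fixes w :: complex
  assumes "\<bar>a\<bar> < 1" "norm w \<le> 1"
  shows "1 - of_real a * w \<noteq> 0"
proof -
  have "norm (of_real a * w) = \<bar>a\<bar> * norm w" by (simp add: norm_mult)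
  also have "\<dots> \<le> \<bar>a\<bar>" using assms by (simp add: mult_left_le)
  finally have "norm (of_real a * w) < 1" using assms by linarith
  thus ?thesis by auto
qed

definition kk :: "real \<Rightarrow> complex \<Rightarrow> complex" where
  "kk a w = 1 / (1 - of_real a * w)"

lemma kernel_0:
  assumes "\<bar>a\<bar> < 1" "\<bar>b\<bar> < 1"
  shows "((\<lambda>t. kk a (cis t) * cnj (kk b (cis t))) has_integral (2*pi/(1-a*b))) {0..2*pi}"
proof -
  have hol: "(\<lambda>w. kk a w) holomorphic_on cball 0 1"
    unfolding kk_def
  proof (intro holomorphic_intros)
    fix w :: complex assume "w \<in> cball 0 1"
    then show "1 - of_real a * w \<noteq> 0" using one_minus_ne assms by auto
  qed
  have "((\<lambda>t. kk a (cis t) / (cis t - of_real b) * \<i> * cis t) has_integral (2*pi*\<i>*kk a b)) {0..2*pi}"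
    by (rule cauchy_circle[OF hol]) (use assms in auto)
  hence "((\<lambda>t. (kk a (cis t) / (cis t - of_real b) * \<i> * cis t) * (-\<i>)) has_integral (2*pi*\<i>*kk a b) * (-\<i>)) {0..2*pi}"
    by (rule has_integral_mult_left)
  moreover have "kk a (cis t) / (cis t - of_real b) * \<i> * cis t * (-\<i>) = kk a (cis t) * cnj (kk b (cis t))" for t
  proof -
    have "cis t - of_real b \<noteq> 0"
    proof
      assume "cis t - of_real b = 0"
      hence "norm (cis t) = norm (of_real b :: complex)" by simp
      thus False using assms by simp
    qed
    have c0: "cis t \<noteq> 0" by simp
    have "cnj (kk b (cis t)) = 1 / (1 - of_real b * cnj (cis t))" unfolding kk_def by simp
    also have "cnj (cis t) = inverse (cis t)" by (simp add: cis_cnj cis_inverse)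
    also have "1 / (1 - of_real b * inverse (cis t)) = cis t / (cis t - of_real b)"
      using c0 \<open>cis t - of_real b \<noteq> 0\<close> by (simp add: divide_simps)
    finally have e: "cnj (kk b (cis t)) = cis t / (cis t - of_real b)" .
    have "kk a (cis t) / (cis t - of_real b) * \<i> * cis t * (-\<i>) = kk a (cis t) * (cis t / (cis t - of_real b)) * (-(\<i>*\<i>))"
      by (simp add: divide_inverse algebra_simps)
    hence "kk a (cis t) / (cis t - of_real b) * \<i> * cis t * (-\<i>) = kk a (cis t) * (cis t / (cis t - of_real b))"
      by simp
    with e show ?thesis by simp
  qed
  moreover have "(2*pi*\<i>*kk a b) * (-\<i>) = of_real (2*pi/(1-a*b))"
  proof -
    have "kk a (of_real b) = of_real (1/(1-a*b))" unfolding kk_def by simp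
    hence "(2*pi*\<i>*kk a b) * (-\<i>) = of_real (2*pi) * of_real (1/(1-a*b))"
      by (simp add: algebra_simps)
    also have "\<dots> = of_real (2*pi/(1-a*b))" by (simp only: of_real_mult[symmetric]) simp
    finally show ?thesis .
  qed
  ultimately show ?thesis by simp
qed

lemma cis_plus_pi: "cis (x + pi) = - cis x"
  by (simp add: cis.ctr complex_eq_iff)

lemma kernel:
  assumes "\<bar>a\<bar> < 1" "\<bar>b\<bar> < 1"
  shows "((\<lambda>t. kk a (cis t) * cnj (kk b (cis t))) has_integral (2*pi/(1-a*b))) {-pi..pi}"
proof -
  have "((\<lambda>t. kk (-a) (cis t) * cnj (kk (-b) (cis t))) has_integral (2*pi/(1-(-a)*(-b)))) {0..2*pi}"
    by (rule kernel_0) (use assms in auto)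
  from shift_pi[OF this] show ?thesis
    by (simp add: cis_plus_pi kk_def)
qed

lemma herglotz:
  fixes h :: "complex \<Rightarrow> complex" and z :: complex
  assumes hol: "h holomorphic_on cball 0 1" and z: "norm z < 1" and h0: "Im (h 0) = 0"
  shows "((\<lambda>t. ((cis t + z)/(cis t - z)) * of_real (Re (h (cis t)))) has_integral (2*pi*h z)) {0..2*pi}"
proof -
  have wz: "cis t - z \<noteq> 0" for t
  proof
    assume "cis t - z = 0" hence "norm (cis t) = norm z" by simp
    thus False using z by simp
  qed
  have c0: "cis t \<noteq> 0" for t by simp
  have hol2: "(\<lambda>w. 2 * h w) holomorphic_on cball 0 1" using hol by (intro holomorphic_intros)
  have I1: "((\<lambda>t. 2 * h (cis t) / (cis t - z) * \<i> * cis t) has_integral (2*pi*\<i>*(2 * h z))) {0..2*pi}"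
    using cauchy_circle[OF hol2 z] by simp
  have I2: "((\<lambda>t. h (cis t) / (cis t - 0) * \<i> * cis t) has_integral (2*pi*\<i>*h 0)) {0..2*pi}"
    using cauchy_circle[OF hol, of 0] by simp
  have I3: "((\<lambda>t. (2 * h (cis t) / (cis t - z) * \<i> * cis t - h (cis t) / (cis t - 0) * \<i> * cis t) * (-\<i>))
      has_integral ((2*pi*\<i>*(2 * h z) - 2*pi*\<i>*h 0) * (-\<i>))) {0..2*pi}"
    by (rule has_integral_mult_left, rule has_integral_diff[OF I1 I2])
  have e1: "(2 * h (cis t) / (cis t - z) * \<i> * cis t - h (cis t) / (cis t - 0) * \<i> * cis t) * (-\<i>)
      = ((cis t + z)/(cis t - z)) * h (cis t)" for t
  proof -
    have "(2 * h (cis t) / (cis t - z) * \<i> * cis t - h (cis t) / (cis t - 0) * \<i> * cis t) * (-\<i>)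
        = (2 * h (cis t) / (cis t - z) * cis t - h (cis t) / (cis t) * cis t) * (-(\<i>*\<i>))"
      by (simp add: divide_inverse algebra_simps)
    also have "\<dots> = 2 * h (cis t) * cis t / (cis t - z) - h (cis t)" using c0[of t] by simp
    also have "\<dots> = ((cis t + z)/(cis t - z)) * h (cis t)"
      using wz[of t] by (simp add: divide_simps) (simp add: algebra_simps)
    finally show ?thesis .
  qed
  have v1: "(2*pi*\<i>*(2 * h z) - 2*pi*\<i>*h 0) * (-\<i>) = 2*pi*(2*h z - h 0)"
  proof -
    have "(2*pi*\<i>*(2 * h z) - 2*pi*\<i>*h 0) * (-\<i>) = 2*pi*(2*h z - h 0) * (-(\<i>*\<i>))"
      by (simp add: algebra_simps)
    thus ?thesis by simp
  qed
  have J1: "((\<lambda>t. ((cis t + z)/(cis t - z)) * h (cis t)) has_integral (2*pi*(2*h z - h 0))) {0..2*pi}"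
    using I3 unfolding e1 v1 .
  define p where "p w = (1 + cnj z * w) / (1 - cnj z * w) * h w" for w
  have nz: "1 - cnj z * w \<noteq> 0" if "norm w \<le> 1" for w
  proof -
    have "norm (cnj z * w) = norm z * norm w" by (simp add: norm_mult)
    also have "\<dots> \<le> norm z" using that by (simp add: mult_left_le)
    finally have "norm (cnj z * w) < 1" using z by linarith
    thus ?thesis by auto
  qed
  have holp: "p holomorphic_on cball 0 1"
    unfolding p_def by (intro holomorphic_intros hol) (use nz in auto)
  have I4: "((\<lambda>t. p (cis t) / (cis t - 0) * \<i> * cis t) has_integral (2*pi*\<i>*p 0)) {0..2*pi}"
    using cauchy_circle[OF holp, of 0] by simp
  have I5: "((\<lambda>t. (p (cis t) / (cis t - 0) * \<i> * cis t) * (-\<i>)) has_integral ((2*pi*\<i>*p 0) * (-\<i>))) {0..2*pi}"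
    by (rule has_integral_mult_left[OF I4])
  have e5: "(p (cis t) / (cis t - 0) * \<i> * cis t) * (-\<i>) = p (cis t)" for t
  proof -
    have "(p (cis t) / (cis t - 0) * \<i> * cis t) * (-\<i>) = p (cis t) / cis t * cis t * (-(\<i>*\<i>))"
      by (simp add: algebra_simps)
    thus ?thesis using c0[of t] by simp
  qed
  have v5: "(2*pi*\<i>*p 0) * (-\<i>) = 2*pi*h 0"
  proof -
    have "(2*pi*\<i>*p 0) * (-\<i>) = 2*pi*p 0 * (-(\<i>*\<i>))" by (simp add: algebra_simps)
    thus ?thesis by (simp add: p_def)
  qed
  have J2: "((\<lambda>t. p (cis t)) has_integral (2*pi*h 0)) {0..2*pi}"
    using I5 unfolding e5 v5 .
  have J3: "((\<lambda>t. cnj (p (cis t))) has_integral cnj (2*pi*h 0)) {0..2*pi}"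
    using J2 has_integral_cnj[of p "2*pi*h 0"] has_integral_cnj[of "\<lambda>t. p (cis t)" "2*pi*h 0"] by (simp add: o_def)
  have h0r: "cnj (h 0) = h 0" using h0 by (simp add: complex_eq_iff)
  have e3: "cnj (p (cis t)) = ((cis t + z)/(cis t - z)) * cnj (h (cis t))" for t
  proof -
    have cc: "cnj (cis t) = inverse (cis t)" by (simp add: cis_cnj cis_inverse)
    have "cnj (p (cis t)) = (1 + z * inverse (cis t)) / (1 - z * inverse (cis t)) * cnj (h (cis t))"
      by (simp add: p_def cc)
    also have "(1 + z * inverse (cis t)) / (1 - z * inverse (cis t)) = (cis t + z)/(cis t - z)"
      using c0[of t] wz[of t] by (simp add: divide_simps)
    finally show ?thesis .
  qed
  have J4: "((\<lambda>t. ((cis t + z)/(cis t - z)) * cnj (h (cis t))) has_integral (2*pi*h 0)) {0..2*pi}"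
    using J3 unfolding e3 by (simp add: h0r)
  have J5: "((\<lambda>t. (((cis t + z)/(cis t - z)) * h (cis t) + ((cis t + z)/(cis t - z)) * cnj (h (cis t))) * (1/2))
     has_integral ((2*pi*(2*h z - h 0) + 2*pi*h 0) * (1/2))) {0..2*pi}"
    by (rule has_integral_mult_left, rule has_integral_add[OF J1 J4])
  have aux: "\<And>q a b::complex. (q*a+q*b)*(1/2) = q*((a+b)/2)" by (simp add: field_simps)
  have e6: "(((cis t + z)/(cis t - z)) * h (cis t) + ((cis t + z)/(cis t - z)) * cnj (h (cis t))) * (1/2)
      = ((cis t + z)/(cis t - z)) * of_real (Re (h (cis t)))" for t
  proof -
    have r: "of_real (Re (h (cis t))) = (h (cis t) + cnj (h (cis t))) / 2"
      by (simp add: complex_add_cnj)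
    have s: "(((cis t + z)/(cis t - z)) * h (cis t) + ((cis t + z)/(cis t - z)) * cnj (h (cis t))) * (1/2)
      = ((cis t + z)/(cis t - z)) * ((h (cis t) + cnj (h (cis t))) / 2)"
      by (rule aux)
    show ?thesis by (simp only: s r)
  qed
  have v6: "(2*pi*(2*h z - h 0) + 2*pi*h 0) * (1/2) = 2*pi*h z" by (simp add: algebra_simps)
  show ?thesis using J5 unfolding e6 v6 .
qed

lemma exp_sub1_bound:
  fixes z :: "'a::{banach,real_normed_field}"
  shows "norm (exp z - 1) \<le> norm z * exp (norm z)"
  using Taylor_exp_field[of z 0] by (simp add: mult.commute)

lemma normsq_int:
  assumes "\<bar>a\<bar> < 1" "\<bar>b\<bar> < 1"
  shows "((\<lambda>t. (cmod (of_real \<alpha> * kk a (cis t) + of_real \<beta> * kk b (cis t)))\<^sup>2) has_integral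
      (2*pi*(\<alpha>\<^sup>2/(1-a\<^sup>2) + \<beta>\<^sup>2/(1-b\<^sup>2) + 2*\<alpha>*\<beta>/(1-a*b)))) {-pi..pi}"
proof -
  have ab: "a*b = b*a" by simp
  have Kaa: "((\<lambda>t. of_real (\<alpha>*\<alpha>) * (kk a (cis t) * cnj (kk a (cis t)))) has_integral of_real (\<alpha>*\<alpha>) * of_real (2*pi/(1-a*a))) {-pi..pi}"
    by (rule has_integral_mult_right, rule kernel) (use assms in auto)
  have Kbb: "((\<lambda>t. of_real (\<beta>*\<beta>) * (kk b (cis t) * cnj (kk b (cis t)))) has_integral of_real (\<beta>*\<beta>) * of_real (2*pi/(1-b*b))) {-pi..pi}"
    by (rule has_integral_mult_right, rule kernel) (use assms in auto)
  have Kab: "((\<lambda>t. of_real (\<alpha>*\<beta>) * (kk a (cis t) * cnj (kk b (cis t)))) has_integral of_real (\<alpha>*\<beta>) * of_real (2*pi/(1-a*b))) {-pi..pi}"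
    by (rule has_integral_mult_right, rule kernel) (use assms in auto)
  have Kba: "((\<lambda>t. of_real (\<alpha>*\<beta>) * (kk b (cis t) * cnj (kk a (cis t)))) has_integral of_real (\<alpha>*\<beta>) * of_real (2*pi/(1-a*b))) {-pi..pi}"
    using has_integral_mult_right[OF kernel[of b a], of "of_real (\<alpha>*\<beta>)"] assms by (simp add: ab)
  have S: "((\<lambda>t. of_real (\<alpha>*\<alpha>) * (kk a (cis t) * cnj (kk a (cis t))) + of_real (\<beta>*\<beta>) * (kk b (cis t) * cnj (kk b (cis t)))
      + (of_real (\<alpha>*\<beta>) * (kk a (cis t) * cnj (kk b (cis t))) + of_real (\<alpha>*\<beta>) * (kk b (cis t) * cnj (kk a (cis t)))))
     has_integral (of_real (\<alpha>*\<alpha>) * of_real (2*pi/(1-a*a)) + of_real (\<beta>*\<beta>) * of_real (2*pi/(1-b*b))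
      + (of_real (\<alpha>*\<beta>) * of_real (2*pi/(1-a*b)) + of_real (\<alpha>*\<beta>) * of_real (2*pi/(1-a*b))))) {-pi..pi}"
    by (intro has_integral_add Kaa Kbb Kab Kba)
  have e: "of_real (\<alpha>*\<alpha>) * (kk a (cis t) * cnj (kk a (cis t))) + of_real (\<beta>*\<beta>) * (kk b (cis t) * cnj (kk b (cis t)))
      + (of_real (\<alpha>*\<beta>) * (kk a (cis t) * cnj (kk b (cis t))) + of_real (\<alpha>*\<beta>) * (kk b (cis t) * cnj (kk a (cis t))))
     = of_real ((cmod (of_real \<alpha> * kk a (cis t) + of_real \<beta> * kk b (cis t)))\<^sup>2)" for t
    unfolding complex_norm_square by (simp add: algebra_simps)
  have v: "of_real (\<alpha>*\<alpha>) * of_real (2*pi/(1-a*a)) + of_real (\<beta>*\<beta>) * of_real (2*pi/(1-b*b))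
      + (of_real (\<alpha>*\<beta>) * of_real (2*pi/(1-a*b)) + of_real (\<alpha>*\<beta>) * of_real (2*pi/(1-a*b)))
     = (of_real (2*pi*(\<alpha>\<^sup>2/(1-a\<^sup>2) + \<beta>\<^sup>2/(1-b\<^sup>2) + 2*\<alpha>*\<beta>/(1-a*b))) :: complex)"
    by (simp add: power2_eq_square algebra_simps)
  have "((\<lambda>t. of_real ((cmod (of_real \<alpha> * kk a (cis t) + of_real \<beta> * kk b (cis t)))\<^sup>2) :: complex) has_integral
      of_real (2*pi*(\<alpha>\<^sup>2/(1-a\<^sup>2) + \<beta>\<^sup>2/(1-b\<^sup>2) + 2*\<alpha>*\<beta>/(1-a*b)))) {-pi..pi}"
    using S unfolding e v .
  from has_integral_Re[OF this] show ?thesis by simp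
qed

lemma LINT_cont:
  fixes h :: "real \<Rightarrow> 'b::euclidean_space"
  assumes "continuous_on {a..b} h"
  shows "set_integrable lborel {a..b} h" "(LINT t:{a..b}|lborel. h t) = integral {a..b} h"
proof -
  show si: "set_integrable lborel {a..b} h"
    unfolding set_integrable_def by (rule borel_integrable_compact) (use assms in auto)
  show "(LINT t:{a..b}|lborel. h t) = integral {a..b} h"
    by (rule set_borel_integral_eq_integral(2)[OF si])
qed



definition "EE = exp (4*pi)"
definition "dl N = 1/(8*pi^2*N)"
definition "bb N = (dl N)^2"
definition "rho N = 1 - bb N"
definition "ep N = 1/(16*pi*EE*N)"
definition "aa N = bb N * (ep N)^2 / 12"
definition "sg N = 1 - aa N"
definition "eta N = 1/(4*N)"
definition "cc N = sqrt ((1 - eta N) * (1 - (sg N)^2) / (2*pi))"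
definition "FF N z = of_real (cc N) * kk (sg N) z"
definition "KK N z = of_real (bb N) * z * kk (rho N) z"
definition "GG N z = FF N z * exp (\<i> * of_real pi * KK N z)"
definition "ff N z = (cmod (FF N z))\<^sup>2"
definition "gg N z = (cmod (GG N z))\<^sup>2"

lemma partial_frac:
  fixes w a b c :: complex
  assumes X: "1 - (1-a)*w \<noteq> 0" and Y: "1 - (1-b)*w \<noteq> 0" and ba: "b - a \<noteq> 0"
  shows "c * (1/(1-(1-a)*w)) * (b*w*(1/(1-(1-b)*w)) - 1) = c*(a/(b-a)) * (1/(1-(1-a)*w)) + c*(-b/(b-a)) * (1/(1-(1-b)*w))"
proof -
  define X where "X = 1-(1-a)*w"
  define Y where "Y = 1-(1-b)*w"
  have X0: "X \<noteq> 0" and Y0: "Y \<noteq> 0" using X Y unfolding X_def Y_def by auto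
  have e1: "b*w - Y = w - 1" unfolding Y_def by (simp add: algebra_simps)
  have e2: "a*Y - b*X = (b-a)*(w-1)" unfolding X_def Y_def by (simp add: algebra_simps)
  have "c * (1/X) * (b*w*(1/Y) - 1) = c * (b*w - Y) / (X*Y)" using X0 Y0 by (simp add: field_simps)
  also have "\<dots> = c * (w-1) / (X*Y)" by (simp add: e1)
  also have "\<dots> = c * ((b-a)*(w-1)) / ((b-a)*X*Y)" using ba by simp
  also have "\<dots> = c * (a*Y - b*X) / ((b-a)*X*Y)" by (simp add: e2)
  also have "\<dots> = (c/(b-a)) * ((a*Y - b*X)/(X*Y))" by (simp add: times_divide_times_eq mult.assoc)
  also have "(a*Y - b*X)/(X*Y) = a/X - b/Y" using X0 Y0 by (simp add: field_simps)
  also have "(c/(b-a)) * (a/X - b/Y) = c*(a/(b-a)) * (1/X) + c*(-b/(b-a)) * (1/Y)" by (simp add: divide_inverse algebra_simps)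
  finally show ?thesis unfolding X_def Y_def .
qed

lemma amgm: "d > 0 \<Longrightarrow> 2*k \<le> d + k\<^sup>2/(d::real)"
proof -
  assume d: "d > 0"
  have "d + k\<^sup>2/d - 2*k = (k - d)\<^sup>2/d" using d by (simp add: field_simps power2_eq_square)
  also have "\<dots> \<ge> 0" using d by simp
  finally show ?thesis by simp
qed

lemma sq_lower:
  fixes x y :: complex and th :: real
  assumes th: "0 < th"
  shows "(cmod (x - y))\<^sup>2 \<ge> (1-th)*(cmod x)\<^sup>2 - (1/th - 1)*(cmod y)\<^sup>2"
proof -
  define a where "a = cmod x"
  define b where "b = cmod y"
  have "\<bar>a - b\<bar> \<le> cmod (x - y)" unfolding a_def b_def by (rule norm_triangle_ineq3)
  hence c: "(a - b)\<^sup>2 \<le> (cmod (x - y))\<^sup>2"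
    by (metis abs_ge_zero power2_abs power_mono)
  have "(a - b)\<^sup>2 - ((1-th)*a\<^sup>2 - (1/th - 1)*b\<^sup>2) = (th*a - b)\<^sup>2/th"
    using th by (simp add: field_simps power2_eq_square)
  also have "\<dots> \<ge> 0" using th by simp
  finally show ?thesis using c unfolding a_def b_def by linarith
qed

lemma int_upper:
  fixes f g :: "real \<Rightarrow> real"
  assumes "continuous_on {a..b} f" "(g has_integral J) {a..b}" "\<And>t. t \<in> {a..b} \<Longrightarrow> f t \<le> g t"
  shows "integral {a..b} f \<le> J"
  by (rule has_integral_le[OF integrable_integral[OF integrable_continuous_interval[OF assms(1)]] assms(2)]) (use assms(3) in auto)

lemma int_lower:
  fixes f g :: "real \<Rightarrow> real"
  assumes "continuous_on {a..b} f" "(g has_integral J) {a..b}" "\<And>t. t \<in> {a..b} \<Longrightarrow> g t \<le> f t"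
  shows "J \<le> integral {a..b} f"
  by (rule has_integral_le[OF assms(2) integrable_integral[OF integrable_continuous_interval[OF assms(1)]]]) (use assms(3) in auto)

lemma EE_ge: "EE \<ge> 1" unfolding EE_def by simp

lemma params:
  assumes N: "N \<ge> 1"
  shows "0 < dl N" "dl N \<le> 1" "0 < bb N" "bb N < 1" "0 < ep N" "ep N < 1" "0 < aa N" "aa N \<le> bb N / 2"
    "0 < eta N" "eta N \<le> 1/4" "0 < rho N" "rho N < 1" "0 < sg N" "sg N < 1" "rho N < sg N"
    "0 < cc N" "(cc N)^2 = (1 - eta N) * (1 - (sg N)^2) / (2*pi)"
proof -
  have pi3: "pi > 3" by (rule pi_gt3)
  have "8*pi^2*N \<ge> 1"
  proof -
    have "pi * pi \<ge> 1 * 1" by (rule mult_mono) (use pi3 in auto)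
    hence "pi^2 \<ge> 1" by (simp add: power2_eq_square)
    have "8*pi^2*N \<ge> 8*1*1" using N by (intro mult_mono) (use \<open>pi^2 \<ge> 1\<close> in auto)
    thus ?thesis by simp
  qed
  hence X: "8*pi^2*N > 0" by linarith
  show d0: "0 < dl N" unfolding dl_def using X by simp
  show d1: "dl N \<le> 1" unfolding dl_def using X \<open>8*pi^2*N \<ge> 1\<close> by (simp add: divide_le_eq)
  have dl1: "dl N < 1"
  proof -
    have "8*pi^2*N > 1"
    proof -
      have "pi * pi \<ge> 1 * 1" by (rule mult_mono) (use pi3 in auto)
    hence "pi^2 \<ge> 1" by (simp add: power2_eq_square)
      have "8*pi^2*N \<ge> 8*1*1" using N by (intro mult_mono) (use \<open>pi^2 \<ge> 1\<close> in auto)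
      thus ?thesis by simp
    qed
    moreover have "N * pi^2 > 0" using N by simp
    ultimately show ?thesis unfolding dl_def by (simp add: divide_less_eq)
  qed
  show b0: "0 < bb N" unfolding bb_def using d0 by simp
  show b1: "bb N < 1" unfolding bb_def using d0 dl1 by (simp add: power_less_one_iff)
  have "16*pi*EE*N \<ge> 16*3*1*1" using EE_ge N pi3 by (intro mult_mono) auto
  hence Y: "16*pi*EE*N > 1" by linarith
  have Yp: "16*pi*EE*N > 0" using Y by linarith
  show e0: "0 < ep N" unfolding ep_def by (rule divide_pos_pos[OF _ Yp]) simp
  show e1: "ep N < 1" unfolding ep_def using divide_less_eq_1_pos[OF Yp, of 1] Y by simp
  show a0: "0 < aa N" unfolding aa_def using b0 e0 by simp
  have "(ep N)^2 \<le> 1" using e0 e1 by (simp add: power_le_one)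
  hence "bb N * (ep N)^2 \<le> bb N * 1" using b0 by (intro mult_left_mono) auto
  thus a1: "aa N \<le> bb N / 2" unfolding aa_def using b0 by simp
  show "0 < eta N" "eta N \<le> 1/4" unfolding eta_def using N by auto
  show "0 < rho N" "rho N < 1" unfolding rho_def using b0 b1 by auto
  show "0 < sg N" "sg N < 1" "rho N < sg N" unfolding sg_def rho_def using a0 a1 b1 b0 by auto
  have "0 < (1 - eta N) * (1 - (sg N)^2) / (2*pi)"
    using \<open>eta N \<le> 1/4\<close> \<open>0 < sg N\<close> \<open>sg N < 1\<close> by (simp add: power_less_one_iff abs_less_iff)
  thus "0 < cc N" "(cc N)^2 = (1 - eta N) * (1 - (sg N)^2) / (2*pi)" unfolding cc_def by auto
qed

context fixes N :: real assumes N: "N \<ge> 1"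
begin

lemmas P = params[OF N]

lemma den_sg: "norm (w::complex) \<le> 1 \<Longrightarrow> 1 - of_real (sg N) * w \<noteq> 0"
  by (rule one_minus_ne) (use P in auto)
lemma den_rho: "norm (w::complex) \<le> 1 \<Longrightarrow> 1 - of_real (rho N) * w \<noteq> 0"
  by (rule one_minus_ne) (use P in auto)

lemma FF_ne: "norm w \<le> 1 \<Longrightarrow> FF N w \<noteq> 0"
  unfolding FF_def kk_def using den_sg[of w] P by simp

lemma ff_pos: "ff N (cis t) > 0"
  unfolding ff_def using FF_ne[of "cis t"] by simp

lemma gg_eq: "gg N z = ff N z * exp (-2*pi*Im (KK N z))"
proof -
  have "cmod (exp (\<i> * of_real pi * KK N z)) = exp (-pi * Im (KK N z))" by simp
  hence "(cmod (exp (\<i> * of_real pi * KK N z)))\<^sup>2 = exp (-2*pi * Im (KK N z))"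
    by (simp add: power2_eq_square exp_add[symmetric])
  thus ?thesis unfolding gg_def ff_def GG_def by (simp add: norm_mult power_mult_distrib)
qed

lemma KK_le: "cmod (KK N (cis t)) \<le> 1"
proof -
  have "norm (1 - of_real (rho N) * cis t) \<ge> norm (1::complex) - norm (of_real (rho N) * cis t)"
    by (rule norm_triangle_ineq2)
  also have "norm (of_real (rho N) * cis t) = rho N" using P by (simp add: norm_mult)
  finally have ge: "norm (1 - of_real (rho N) * cis t) \<ge> bb N" unfolding rho_def by simp
  have "cmod (KK N (cis t)) = bb N / norm (1 - of_real (rho N) * cis t)"
    unfolding KK_def kk_def using P by (simp add: norm_mult norm_divide)
  also have "\<dots> \<le> 1" using ge P by (simp add: divide_le_eq)
  finally show ?thesis .
qed

lemma KK_norm: "cmod (KK N (cis t)) = cmod (of_real (bb N) * kk (rho N) (cis t) + of_real 0 * kk (rho N) (cis t))"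
  unfolding KK_def by (simp add: norm_mult)

lemma ff_norm: "ff N (cis t) = (cmod (of_real (cc N) * kk (sg N) (cis t) + of_real 0 * kk (sg N) (cis t)))\<^sup>2"
  unfolding ff_def FF_def by simp

definition "AA = aa N / (bb N - aa N)"
definition "BB = - bb N / (bb N - aa N)"

lemma KS_eq: "ff N (cis t) * (cmod (KK N (cis t) - 1))\<^sup>2 =
   (cmod (of_real (cc N * AA) * kk (sg N) (cis t) + of_real (cc N * BB) * kk (rho N) (cis t)))\<^sup>2"
proof -
  define w where "w = cis t"
  have d1: "1 - of_real (sg N) * w \<noteq> 0" using den_sg[of w] unfolding w_def by simp
  have d2: "1 - of_real (rho N) * w \<noteq> 0" using den_rho[of w] unfolding w_def by simp
  have ba: "bb N - aa N \<noteq> 0" using P by simp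
  have ba': "of_real (bb N) - of_real (aa N) \<noteq> (0::complex)" using ba by (metis of_real_diff of_real_eq_0_iff)
  have d1': "1 - (1 - of_real (aa N)) * w \<noteq> 0" using d1 unfolding sg_def by simp
  have d2': "1 - (1 - of_real (bb N)) * w \<noteq> 0" using d2 unfolding rho_def by simp
  have "FF N w * (KK N w - 1) = of_real (cc N) * (1/(1-(1-of_real (aa N))*w)) * (of_real (bb N)*w*(1/(1-(1-of_real (bb N))*w)) - 1)"
    unfolding FF_def KK_def kk_def sg_def rho_def by simp
  also have "\<dots> = of_real (cc N)*(of_real (aa N)/(of_real (bb N)-of_real (aa N))) * (1/(1-(1-of_real (aa N))*w))
     + of_real (cc N)*(-of_real (bb N)/(of_real (bb N)-of_real (aa N))) * (1/(1-(1-of_real (bb N))*w))"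
    by (rule partial_frac[OF d1' d2' ba'])
  also have "\<dots> = of_real (cc N * AA) * kk (sg N) w + of_real (cc N * BB) * kk (rho N) w"
    unfolding AA_def BB_def kk_def sg_def rho_def by simp
  finally have "FF N w * (KK N w - 1) = of_real (cc N * AA) * kk (sg N) w + of_real (cc N * BB) * kk (rho N) w" .
  hence "(cmod (FF N w) * cmod (KK N w - 1))\<^sup>2 = (cmod (of_real (cc N * AA) * kk (sg N) w + of_real (cc N * BB) * kk (rho N) w))\<^sup>2"
    by (metis norm_mult)
  thus ?thesis unfolding ff_def w_def power_mult_distrib .
qed


lemma I_f: "((\<lambda>t. ff N (cis t)) has_integral (1 - eta N)) {-pi..pi}"
proof -
  have s: "\<bar>sg N\<bar> < 1" using P by auto
  have "((\<lambda>t. (cmod (of_real (cc N) * kk (sg N) (cis t) + of_real 0 * kk (sg N) (cis t)))\<^sup>2) has_integral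
      (2*pi*((cc N)\<^sup>2/(1-(sg N)\<^sup>2) + 0\<^sup>2/(1-(sg N)\<^sup>2) + 2*(cc N)*0/(1-sg N * sg N)))) {-pi..pi}"
    by (rule normsq_int[OF s s])
  moreover have "2*pi*((cc N)\<^sup>2/(1-(sg N)\<^sup>2) + 0\<^sup>2/(1-(sg N)\<^sup>2) + 2*(cc N)*0/(1-sg N * sg N)) = 1 - eta N"
  proof -
    have "1 - (sg N)\<^sup>2 > 0" using P by (simp add: power_less_one_iff)
    thus ?thesis using P(17) by (simp add: field_simps)
  qed
  ultimately show ?thesis unfolding ff_norm[symmetric] by simp
qed

lemma I_K: "((\<lambda>t. (cmod (KK N (cis t)))\<^sup>2) has_integral (2*pi*((bb N)\<^sup>2/(1-(rho N)\<^sup>2)))) {-pi..pi}"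
proof -
  have s: "\<bar>rho N\<bar> < 1" using P by auto
  have "((\<lambda>t. (cmod (of_real (bb N) * kk (rho N) (cis t) + of_real 0 * kk (rho N) (cis t)))\<^sup>2) has_integral
      (2*pi*((bb N)\<^sup>2/(1-(rho N)\<^sup>2) + 0\<^sup>2/(1-(rho N)\<^sup>2) + 2*(bb N)*0/(1-rho N * rho N)))) {-pi..pi}"
    by (rule normsq_int[OF s s])
  thus ?thesis unfolding KK_norm[symmetric] by simp
qed

lemma IK_bound: "2*pi*((bb N)\<^sup>2/(1-(rho N)\<^sup>2)) \<le> 2*pi*(dl N)\<^sup>2"
proof -
  have "1 - (rho N)\<^sup>2 = bb N * (1 + rho N)" unfolding rho_def by (simp add: power2_eq_square algebra_simps)
  also have "\<dots> \<ge> bb N" using P by simp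
  finally have d: "1 - (rho N)\<^sup>2 \<ge> bb N" .
  have "(bb N)\<^sup>2/(1-(rho N)\<^sup>2) \<le> (bb N)\<^sup>2/bb N"
    by (rule divide_left_mono) (use d P in auto)
  also have "\<dots> = (dl N)\<^sup>2" unfolding bb_def by (simp add: power2_eq_square)
  finally have X: "(bb N)\<^sup>2/(1-(rho N)\<^sup>2) \<le> (dl N)\<^sup>2" .
  show ?thesis by (rule mult_left_mono[OF X]) simp
qed

definition "SS = 2*pi*((cc N * AA)\<^sup>2/(1-(sg N)\<^sup>2) + (cc N * BB)\<^sup>2/(1-(rho N)\<^sup>2) + 2*(cc N * AA)*(cc N * BB)/(1 - sg N * rho N))"

lemma I_S: "((\<lambda>t. ff N (cis t) * (cmod (KK N (cis t) - 1))\<^sup>2) has_integral SS) {-pi..pi}"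
proof -
  have s: "\<bar>sg N\<bar> < 1" "\<bar>rho N\<bar> < 1" using P by auto
  show ?thesis unfolding KS_eq SS_def by (rule normsq_int[OF s])
qed

lemma SS_bound: "SS \<le> (ep N)\<^sup>2"
proof -
  define a where "a = aa N"
  define b where "b = bb N"
  have a0: "0 < a" and ab: "a \<le> b/2" and b0: "0 < b" and b1: "b < 1" unfolding a_def b_def using P by auto
  have sgd: "1 - (sg N)\<^sup>2 = a * (2 - a)" unfolding sg_def a_def by (simp add: power2_eq_square algebra_simps)
  have rhod: "1 - (rho N)\<^sup>2 = b * (2 - b)" unfolding rho_def b_def by (simp add: power2_eq_square algebra_simps)
  have sgp: "1 - (sg N)\<^sup>2 > 0" unfolding sgd using a0 ab b1 by simp
  have rhop: "1 - (rho N)\<^sup>2 > 0" unfolding rhod using b0 b1 by simp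
  have cc2: "2*pi*(cc N)\<^sup>2 \<le> 1 - (sg N)\<^sup>2"
  proof -
    have "2*pi*(cc N)\<^sup>2 = (1-eta N)*(1-(sg N)\<^sup>2)" using P(17) by simp
    also have "\<dots> = (1-(sg N)\<^sup>2) - eta N * (1-(sg N)\<^sup>2)" by (simp add: algebra_simps)
    also have "eta N * (1-(sg N)\<^sup>2) \<ge> 0" using P(9) sgp by simp
    hence "(1-(sg N)\<^sup>2) - eta N * (1-(sg N)\<^sup>2) \<le> 1-(sg N)\<^sup>2" by linarith
    finally show ?thesis .
  qed
  have AA0: "AA \<ge> 0" and BB0: "BB \<le> 0" unfolding AA_def BB_def using P by auto
  have sr: "1 - sg N * rho N > 0" using P by (smt (verit) mult_less_cancel_left1 mult_pos_pos)
  have T3: "2*pi*(2*(cc N * AA)*(cc N * BB)/(1 - sg N * rho N)) \<le> 0"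
  proof -
    have "2*(cc N * AA)*(cc N * BB) \<le> 0" using AA0 BB0 P by (simp add: mult_nonneg_nonpos mult_nonneg_nonneg)
    hence "2*(cc N * AA)*(cc N * BB)/(1 - sg N * rho N) \<le> 0" using sr by (simp add: divide_nonpos_pos)
    thus ?thesis by (rule mult_nonneg_nonpos[rotated]) simp
  qed
  have bma: "b - a \<ge> b/2" using ab by simp
  have T1: "2*pi*((cc N * AA)\<^sup>2/(1-(sg N)\<^sup>2)) \<le> AA\<^sup>2"
  proof -
    have "2*pi*((cc N * AA)\<^sup>2/(1-(sg N)\<^sup>2)) = (2*pi*(cc N)\<^sup>2/(1-(sg N)\<^sup>2)) * AA\<^sup>2"
      by (simp add: power_mult_distrib)
    also have "\<dots> \<le> 1 * AA\<^sup>2" by (rule mult_right_mono) (use cc2 sgp in auto)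
    finally show ?thesis by simp
  qed
  have T2: "2*pi*((cc N * BB)\<^sup>2/(1-(rho N)\<^sup>2)) \<le> (1-(sg N)\<^sup>2)/(1-(rho N)\<^sup>2) * BB\<^sup>2"
  proof -
    have "2*pi*((cc N * BB)\<^sup>2/(1-(rho N)\<^sup>2)) = (2*pi*(cc N)\<^sup>2)/(1-(rho N)\<^sup>2) * BB\<^sup>2"
      by (simp add: power_mult_distrib)
    also have "\<dots> \<le> (1-(sg N)\<^sup>2)/(1-(rho N)\<^sup>2) * BB\<^sup>2"
      by (intro mult_right_mono divide_right_mono cc2) (use rhop in auto)
    finally show ?thesis .
  qed
  have A2: "AA\<^sup>2 \<le> 2*a/b"
  proof -
    have "AA = a/(b-a)" unfolding AA_def a_def b_def by simp
    also have "\<dots> \<le> a/(b/2)" by (rule divide_left_mono) (use a0 bma b0 in auto)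
    finally have "AA \<le> 2*a/b" by (simp add: mult.commute)
    hence "AA\<^sup>2 \<le> (2*a/b)\<^sup>2" using AA0 by (simp add: power_mono)
    also have "(2*a/b)\<^sup>2 = (2*a/b) * (2*a/b)" by (simp add: power2_eq_square)
    also have "\<dots> \<le> (2*a/b) * 1"
      by (rule mult_left_mono) (use ab b0 a0 in \<open>auto simp: divide_le_eq\<close>)
    finally show ?thesis by simp
  qed
  have B2: "BB\<^sup>2 \<le> 4"
  proof -
    have "BB\<^sup>2 = (b/(b-a))\<^sup>2" unfolding BB_def a_def b_def by (simp add: power2_eq_square)
    also have "b/(b-a) \<le> b/(b/2)" by (rule divide_left_mono) (use a0 bma b0 in auto)
    hence "(b/(b-a))\<^sup>2 \<le> (b/(b/2))\<^sup>2" using b0 bma by (intro power_mono) auto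
    also have "(b/(b/2))\<^sup>2 = 4" using b0 by simp
    finally show ?thesis .
  qed
  have Q: "(1-(sg N)\<^sup>2)/(1-(rho N)\<^sup>2) \<le> 2*a/b"
  proof -
    have "(1-(sg N)\<^sup>2)/(1-(rho N)\<^sup>2) = (a*(2-a))/(b*(2-b))" unfolding sgd rhod ..
    also have "\<dots> \<le> (a*2)/(b*1)"
      by (intro frac_le mult_left_mono mult_mono) (use a0 b0 b1 ab in auto)
    finally show ?thesis by (simp add: mult.commute)
  qed
  have "SS \<le> AA\<^sup>2 + (1-(sg N)\<^sup>2)/(1-(rho N)\<^sup>2) * BB\<^sup>2 + 0"
    using T1 T2 T3 unfolding SS_def distrib_left by linarith
  also have "(1-(sg N)\<^sup>2)/(1-(rho N)\<^sup>2) * BB\<^sup>2 \<le> (2*a/b) * 4"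
    by (intro mult_mono Q B2) (use sgp rhop a0 b0 in auto)
  finally have "SS \<le> 2*a/b + 2*a/b*4" using A2 by linarith
  also have "\<dots> = 10 * (a/b)" by simp
  also have "a/b = (ep N)\<^sup>2/12" unfolding a_def b_def aa_def using P by simp
  finally have "SS \<le> 10 * ((ep N)\<^sup>2/12)" .
  moreover have "(ep N)\<^sup>2 \<ge> 0" by simp
  ultimately show ?thesis by linarith
qed

lemma cont_FF: "continuous_on S (\<lambda>t. FF N (cis t))"
  unfolding FF_def kk_def by (intro continuous_intros) (use den_sg in auto)
lemma cont_KK: "continuous_on S (\<lambda>t. KK N (cis t))"
  unfolding KK_def kk_def by (intro continuous_intros) (use den_rho in auto)
lemma cont_GG: "continuous_on S (\<lambda>t. GG N (cis t))"
  unfolding GG_def by (intro continuous_intros cont_FF cont_KK)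
lemma cont_ff: "continuous_on S (\<lambda>t. ff N (cis t))"
  unfolding ff_def by (intro continuous_intros cont_FF)
lemma cont_gg: "continuous_on S (\<lambda>t. gg N (cis t))"
  unfolding gg_def by (intro continuous_intros cont_GG)
lemma gg_pos: "gg N (cis t) > 0"
  unfolding gg_eq using ff_pos by simp
lemma cont_lnf: "continuous_on S (\<lambda>t. ln (ff N (cis t)))"
  by (intro continuous_intros cont_ff) (use ff_pos in \<open>auto simp: less_imp_neq[symmetric]\<close>)
lemma cont_lng: "continuous_on S (\<lambda>t. ln (gg N (cis t)))"
  by (intro continuous_intros cont_gg) (use gg_pos in \<open>auto simp: less_imp_neq[symmetric]\<close>)

lemma ln_diff: "ln (gg N (cis t)) - ln (ff N (cis t)) = -2*pi*Im (KK N (cis t))"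
  unfolding gg_eq using ff_pos[of t] by (simp add: ln_mult)

lemma pw_A: "\<bar>ln (gg N (cis t)) - ln (ff N (cis t))\<bar> \<le> pi*dl N + (pi/dl N)*(cmod (KK N (cis t)))\<^sup>2"
proof -
  define k where "k = cmod (KK N (cis t))"
  have "\<bar>ln (gg N (cis t)) - ln (ff N (cis t))\<bar> = 2*pi*\<bar>Im (KK N (cis t))\<bar>"
    unfolding ln_diff by (simp add: abs_mult)
  also have "\<dots> \<le> pi*(2*k)" unfolding k_def using abs_Im_le_cmod[of "KK N (cis t)"] by simp
  also have "\<dots> \<le> pi*(dl N + k\<^sup>2/dl N)" by (rule mult_left_mono[OF amgm]) (use P in auto)
  also have "\<dots> = pi*dl N + (pi/dl N)*k\<^sup>2" by (simp add: algebra_simps)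
  finally show ?thesis unfolding k_def .
qed

lemma exp2pi: "exp (2*pi) \<le> EE" unfolding EE_def by simp

lemma pw_B: "\<bar>gg N (cis t) - ff N (cis t)\<bar> \<le> pi*EE*(ep N * ff N (cis t) + (1/ep N) * (ff N (cis t) * (cmod (KK N (cis t) - 1))\<^sup>2))"
proof -
  define x where "x = -2*pi*Im (KK N (cis t))"
  define m where "m = cmod (KK N (cis t) - 1)"
  define F where "F = ff N (cis t)"
  have m0: "m \<ge> 0" unfolding m_def by simp
  have F0: "F > 0" unfolding F_def using ff_pos .
  have "\<bar>Im (KK N (cis t))\<bar> \<le> cmod (KK N (cis t))" by (rule abs_Im_le_cmod)
  hence x1: "\<bar>x\<bar> \<le> 2*pi" unfolding x_def using KK_le[of t] by (simp add: abs_mult)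
  have "\<bar>Im (KK N (cis t))\<bar> = \<bar>Im (KK N (cis t) - 1)\<bar>" by simp
  also have "\<dots> \<le> m" unfolding m_def by (rule abs_Im_le_cmod)
  finally have x2: "\<bar>x\<bar> \<le> 2*pi*m" unfolding x_def by (simp add: abs_mult)
  have "\<bar>exp x - 1\<bar> \<le> \<bar>x\<bar> * exp \<bar>x\<bar>" using exp_sub1_bound[of x] by simp
  also have "\<dots> \<le> (2*pi*m) * EE"
    by (intro mult_mono x2 order.trans[OF _ exp2pi]) (use x1 m0 in auto)
  finally have ex: "\<bar>exp x - 1\<bar> \<le> pi*EE*(2*m)" by (simp add: algebra_simps)
  have "gg N (cis t) - ff N (cis t) = F * (exp x - 1)"
    unfolding gg_eq F_def x_def by (simp add: algebra_simps)
  hence "\<bar>gg N (cis t) - ff N (cis t)\<bar> = \<bar>F\<bar> * \<bar>exp x - 1\<bar>" by (simp add: abs_mult)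
  also have "\<bar>F\<bar> = F" using F0 by simp
  finally have "\<bar>gg N (cis t) - ff N (cis t)\<bar> = F * \<bar>exp x - 1\<bar>" .
  also have "\<dots> \<le> F * (pi*EE*(2*m))" by (rule mult_left_mono[OF ex]) (use F0 in auto)
  also have "\<dots> \<le> F * (pi*EE*(ep N + m\<^sup>2/ep N))"
    by (intro mult_left_mono amgm) (use F0 P EE_ge in auto)
  also have "\<dots> = pi*EE*(ep N * F + (1/ep N) * (F * m\<^sup>2))" by (simp add: algebra_simps)
  finally show ?thesis unfolding F_def m_def .
qed

lemma pw_C: "(cmod (GG N (cis t) + FF N (cis t)))\<^sup>2 \<le> pi\<^sup>2*EE*(ff N (cis t) * (cmod (KK N (cis t) - 1))\<^sup>2)"
proof -
  define w where "w = \<i> * of_real pi * (KK N (cis t) - 1)"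
  define m where "m = cmod (KK N (cis t) - 1)"
  have m0: "m \<ge> 0" unfolding m_def by simp
  have m2: "m \<le> 2"
  proof -
    have "m \<le> cmod (KK N (cis t)) + cmod (1::complex)" unfolding m_def by (rule norm_triangle_ineq4)
    thus ?thesis using KK_le[of t] by simp
  qed
  have nw: "cmod w = pi * m" unfolding w_def m_def by (simp add: norm_mult)
  have "exp (\<i> * of_real pi * KK N (cis t)) = exp (w + \<i> * of_real pi)" unfolding w_def by (simp add: algebra_simps)
  also have "\<dots> = - exp w" by (simp add: exp_add)
  finally have e: "GG N (cis t) + FF N (cis t) = FF N (cis t) * (- (exp w - 1))"
    unfolding GG_def by (simp add: algebra_simps)
  have "cmod (exp w - 1) \<le> cmod w * exp (cmod w)" by (rule exp_sub1_bound)
  also have "\<dots> \<le> (pi*m) * exp (2*pi)"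
    unfolding nw by (intro mult_left_mono) (use m2 m0 in auto)
  finally have b: "cmod (exp w - 1) \<le> (pi*m) * exp (2*pi)" .
  hence "(cmod (exp w - 1))\<^sup>2 \<le> ((pi*m) * exp (2*pi))\<^sup>2" by (intro power_mono) auto
  also have "\<dots> = pi\<^sup>2 * EE * m\<^sup>2"
    unfolding EE_def by (simp add: power_mult_distrib power2_eq_square exp_add[symmetric])
  finally have b2: "(cmod (exp w - 1))\<^sup>2 \<le> pi\<^sup>2 * EE * m\<^sup>2" .
  have "(cmod (GG N (cis t) + FF N (cis t)))\<^sup>2 = ff N (cis t) * (cmod (exp w - 1))\<^sup>2"
    unfolding e ff_def by (simp add: norm_mult power_mult_distrib norm_minus_commute)
  also have "\<dots> \<le> ff N (cis t) * (pi\<^sup>2 * EE * m\<^sup>2)"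
    by (rule mult_left_mono[OF b2]) (use ff_pos[of t] in auto)
  finally show ?thesis unfolding m_def by (simp add: algebra_simps)
qed

lemma pw_D: "(cmod (GG N (cis t) - FF N (cis t)))\<^sup>2 \<ge> (1 - eta N)*(4*ff N (cis t)) - (1/eta N - 1)*(cmod (GG N (cis t) + FF N (cis t)))\<^sup>2"
proof -
  have "(cmod (2*FF N (cis t) - (GG N (cis t) + FF N (cis t))))\<^sup>2 \<ge>
     (1 - eta N)*(cmod (2*FF N (cis t)))\<^sup>2 - (1/eta N - 1)*(cmod (GG N (cis t) + FF N (cis t)))\<^sup>2"
    by (rule sq_lower) (use P in auto)
  moreover have "cmod (2*FF N (cis t) - (GG N (cis t) + FF N (cis t))) = cmod (GG N (cis t) - FF N (cis t))"
    by (metis (no_types, lifting) add_diff_cancel_right' minus_diff_eq mult_2 norm_minus_cancel diff_diff_eq2 add.commute)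
  moreover have "(cmod (2*FF N (cis t)))\<^sup>2 = 4*ff N (cis t)" unfolding ff_def by (simp add: norm_mult power_mult_distrib)
  ultimately show ?thesis by simp
qed
end



context fixes N :: real assumes N: "N \<ge> 1"
begin

lemmas PC = params[OF N]

lemma EA: "integral {-pi..pi} (\<lambda>t. \<bar>ln (gg N (cis t)) - ln (ff N (cis t))\<bar>) \<le> 1/N"
proof -
  have h0: "((\<lambda>t. pi*dl N) has_integral (2*pi*(pi*dl N))) {-pi..pi}"
    using has_integral_const_real[of "pi*dl N" "-pi" pi] by simp
  have h: "((\<lambda>t. pi*dl N + (pi/dl N)*(cmod (KK N (cis t)))\<^sup>2) has_integral
      (2*pi*(pi*dl N) + (pi/dl N)*(2*pi*((bb N)\<^sup>2/(1-(rho N)\<^sup>2))))) {-pi..pi}"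
    by (intro has_integral_add h0 has_integral_mult_right I_K[OF N])
  have "integral {-pi..pi} (\<lambda>t. \<bar>ln (gg N (cis t)) - ln (ff N (cis t))\<bar>) \<le>
     2*pi*(pi*dl N) + (pi/dl N)*(2*pi*((bb N)\<^sup>2/(1-(rho N)\<^sup>2)))"
    apply (rule int_upper[OF _ h])
    subgoal by (auto intro!: continuous_intros cont_lnf[OF N] cont_lng[OF N])
    subgoal by (rule pw_A[OF N])
    done
  also have "(pi/dl N)*(2*pi*((bb N)\<^sup>2/(1-(rho N)\<^sup>2))) \<le> (pi/dl N)*(2*pi*(dl N)\<^sup>2)"
    by (rule mult_left_mono[OF IK_bound[OF N]]) (use PC in auto)
  also have "2*pi*(pi*dl N) + (pi/dl N)*(2*pi*(dl N)\<^sup>2) = 4*pi^2*dl N"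
    using PC by (simp add: power2_eq_square)
  also have "\<dots> = 1/(2*N)" unfolding dl_def using N by (simp add: field_simps)
  also have "\<dots> \<le> 1/N" using N by (simp add: field_simps)
  finally show ?thesis by simp
qed

lemma EB: "integral {-pi..pi} (\<lambda>t. \<bar>gg N (cis t) - ff N (cis t)\<bar>) \<le> 1/(8*N)"
proof -
  have h: "((\<lambda>t. pi*EE*(ep N * ff N (cis t) + (1/ep N) * (ff N (cis t) * (cmod (KK N (cis t) - 1))\<^sup>2))) has_integral
      pi*EE*(ep N * (1 - eta N) + (1/ep N) * SS N)) {-pi..pi}"
    by (intro has_integral_add has_integral_mult_right I_f[OF N] I_S[OF N])
  have "integral {-pi..pi} (\<lambda>t. \<bar>gg N (cis t) - ff N (cis t)\<bar>) \<le> pi*EE*(ep N * (1 - eta N) + (1/ep N) * SS N)"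
    apply (rule int_upper[OF _ h])
    subgoal by (auto intro!: continuous_intros cont_ff[OF N] cont_gg[OF N])
    subgoal by (rule pw_B[OF N])
    done
  also have "\<dots> \<le> pi*EE*(ep N * 1 + (1/ep N) * (ep N)\<^sup>2)"
    by (intro mult_left_mono add_mono SS_bound[OF N]) (use PC EE_ge in auto)
  also have "\<dots> = 2*pi*EE*ep N" using PC by (simp add: power2_eq_square)
  also have "\<dots> = 1/(8*N)" unfolding ep_def using N EE_ge by (simp add: field_simps)
  finally show ?thesis .
qed

lemma EC: "integral {-pi..pi} (\<lambda>t. (cmod (GG N (cis t) + FF N (cis t)))\<^sup>2) \<le> 1/(256*N^2)"
proof -
  have h: "((\<lambda>t. pi\<^sup>2*EE*(ff N (cis t) * (cmod (KK N (cis t) - 1))\<^sup>2)) has_integral pi\<^sup>2*EE*SS N) {-pi..pi}"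
    by (intro has_integral_mult_right I_S[OF N])
  have "integral {-pi..pi} (\<lambda>t. (cmod (GG N (cis t) + FF N (cis t)))\<^sup>2) \<le> pi\<^sup>2*EE*SS N"
    apply (rule int_upper[OF _ h])
    subgoal by (auto intro!: continuous_intros cont_FF[OF N] cont_GG[OF N])
    subgoal by (rule pw_C[OF N])
    done
  also have "\<dots> \<le> pi\<^sup>2*EE*(ep N)\<^sup>2" by (rule mult_left_mono[OF SS_bound[OF N]]) (use EE_ge in auto)
  also have "\<dots> = 1/(256*EE*N^2)" unfolding ep_def using N EE_ge by (simp add: field_simps power2_eq_square)
  also have "\<dots> \<le> 1/(256*N^2)" using N EE_ge by (simp add: field_simps)
  finally show ?thesis .
qed

lemma ED: "integral {-pi..pi} (\<lambda>t. (cmod (GG N (cis t) - FF N (cis t)))\<^sup>2) \<ge> (2 - 1/N)\<^sup>2"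
proof -
  define C where "C = integral {-pi..pi} (\<lambda>t. (cmod (GG N (cis t) + FF N (cis t)))\<^sup>2)"
  have ci: "(\<lambda>t. (cmod (GG N (cis t) + FF N (cis t)))\<^sup>2) integrable_on {-pi..pi}"
    by (intro integrable_continuous_interval continuous_intros cont_FF[OF N] cont_GG[OF N])
  have h: "((\<lambda>t. (1 - eta N)*(4*ff N (cis t)) - (1/eta N - 1)*(cmod (GG N (cis t) + FF N (cis t)))\<^sup>2) has_integral
      ((1 - eta N)*(4*(1 - eta N)) - (1/eta N - 1)*C)) {-pi..pi}"
    unfolding C_def by (intro has_integral_diff has_integral_mult_right I_f[OF N] integrable_integral ci)
  have "(1 - eta N)*(4*(1 - eta N)) - (1/eta N - 1)*C \<le> integral {-pi..pi} (\<lambda>t. (cmod (GG N (cis t) - FF N (cis t)))\<^sup>2)"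
    apply (rule int_lower[OF _ h])
    subgoal by (auto intro!: continuous_intros cont_FF[OF N] cont_GG[OF N])
    subgoal by (rule pw_D[OF N])
    done
  moreover have "(2 - 1/N)\<^sup>2 \<le> (1 - eta N)*(4*(1 - eta N)) - (1/eta N - 1)*C"
  proof -
    define u where "u = 1/N"
    have u0: "0 < u" and u1: "u \<le> 1" unfolding u_def using N by auto
    have et: "eta N = u/4" unfolding eta_def u_def by simp
    have C1: "C \<le> u\<^sup>2/256" using EC unfolding C_def u_def by (simp add: power2_eq_square field_simps)
    have C0: "C \<ge> 0" unfolding C_def by (rule integral_nonneg[OF ci]) simp
    have k: "1/eta N - 1 = 4/u - 1" unfolding et by simp
    have k0: "4/u - 1 \<ge> 0" using u0 u1 by (simp add: field_simps)
    have "(4/u - 1)*C \<le> (4/u)*C" using C0 by (simp add: algebra_simps)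
    also have "\<dots> \<le> (4/u)*(u\<^sup>2/256)" by (rule mult_left_mono[OF C1]) (use u0 in auto)
    also have "\<dots> = u/64" using u0 by (simp add: power2_eq_square)
    finally have kc: "(1/eta N - 1)*C \<le> u/64" unfolding k .
    have "(1 - eta N)*(4*(1 - eta N)) = 4 - 2*u + u\<^sup>2/4" unfolding et by (simp add: power2_eq_square field_simps)
    moreover have "(2 - 1/N)\<^sup>2 = 4 - 4*u + u\<^sup>2" unfolding u_def by (simp add: power2_eq_square algebra_simps)
    moreover have "u\<^sup>2 \<le> u" using u0 u1 by (simp add: power2_eq_square mult_left_le)
    ultimately show ?thesis using kc u0 by linarith
  qed
  ultimately show ?thesis by linarith
qed

end



lemma herglotz_LINT:
  fixes h :: "complex \<Rightarrow> complex" and z :: complex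
  assumes hol: "h holomorphic_on cball 0 1" and z: "norm z < 1" and h0: "Im (h 0) = 0"
  shows "(LINT t:{0..2*pi}|lborel. ((cis t + z)/(cis t - z)) * of_real (Re (h (cis t)))) = 2*pi*h z"
proof -
  have wz: "cis t - z \<noteq> 0" for t
  proof
    assume "cis t - z = 0" hence "norm (cis t) = norm z" by simp
    thus False using z by simp
  qed
  have hc: "continuous_on (cball 0 1) h" by (rule holomorphic_on_imp_continuous_on[OF hol])
  have hc2: "continuous_on {0..2*pi} (\<lambda>t. h (cis t))"
    by (rule continuous_on_compose2[OF hc]) (auto intro!: continuous_intros)
  have cont: "continuous_on {0..2*pi} (\<lambda>t. ((cis t + z)/(cis t - z)) * of_real (Re (h (cis t))))"
    by (intro continuous_intros hc2) (use wz in auto)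
  have "(LINT t:{0..2*pi}|lborel. ((cis t + z)/(cis t - z)) * of_real (Re (h (cis t)))) =
      integral {0..2*pi} (\<lambda>t. ((cis t + z)/(cis t - z)) * of_real (Re (h (cis t))))"
    by (rule LINT_cont(2)[OF cont])
  also have "\<dots> = 2*pi*h z" by (rule integral_unique[OF herglotz[OF hol z h0]])
  finally show ?thesis .
qed

context fixes N :: real assumes N: "N \<ge> 1"
begin

lemmas PD = params[OF N]

definition "hf w = 2 * (of_real (ln (cc N)) - Ln (1 - of_real (sg N) * w))"
definition "hg w = hf w + 2 * \<i> * of_real pi * KK N w"

lemma notnp: "norm (w::complex) \<le> 1 \<Longrightarrow> 1 - of_real (sg N) * w \<notin> \<real>\<^sub>\<le>\<^sub>0"
proof -
  assume w: "norm w \<le> 1"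
  have "Re w \<le> 1" using complex_Re_le_cmod[of w] w by linarith
  hence "sg N * Re w \<le> sg N * 1" using PD by (intro mult_left_mono) auto
  moreover have "Re (1 - of_real (sg N) * w) = 1 - sg N * Re w" by simp
  ultimately have "Re (1 - of_real (sg N) * w) > 0" using PD by linarith
  thus ?thesis by (simp add: complex_nonpos_Reals_iff)
qed

lemma hol_hf: "hf holomorphic_on cball 0 1"
  unfolding hf_def by (intro holomorphic_intros) (use notnp in auto)

lemma hol_hg: "hg holomorphic_on cball 0 1"
  unfolding hg_def KK_def kk_def by (intro holomorphic_intros hol_hf) (use den_rho[OF N] in auto)

lemma hf0: "Im (hf 0) = 0" unfolding hf_def by simp
lemma hg0: "Im (hg 0) = 0" unfolding hg_def KK_def using hf0 by simp

lemma lnff: "ln (ff N (cis t)) = Re (hf (cis t))"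
proof -
  define m where "m = cmod (1 - of_real (sg N) * cis t)"
  have m0: "m > 0" unfolding m_def using den_sg[OF N, of "cis t"] by simp
  have "ff N (cis t) = (cc N / m)^2" unfolding ff_def FF_def kk_def m_def using PD by (simp add: norm_mult norm_divide)
  hence "ln (ff N (cis t)) = 2 * ln (cc N / m)" using PD m0 by (simp add: ln_realpow)
  also have "\<dots> = 2 * (ln (cc N) - ln m)" using PD m0 by (simp add: ln_div)
  also have "\<dots> = Re (hf (cis t))" unfolding hf_def m_def using den_sg[OF N, of "cis t"] by simp
  finally show ?thesis .
qed

lemma lngg: "ln (gg N (cis t)) = Re (hg (cis t))"
proof -
  have "ln (gg N (cis t)) = ln (ff N (cis t)) + (-2*pi*Im (KK N (cis t)))"
    using ln_diff[OF N, of t] by simp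
  also have "\<dots> = Re (hg (cis t))" unfolding hg_def lnff by simp
  finally show ?thesis .
qed

lemma expFF: "norm z < 1 \<Longrightarrow> exp (of_real (ln (cc N)) - Ln (1 - of_real (sg N) * z)) = FF N z"
proof -
  assume z: "norm z < 1"
  define u where "u = 1 - of_real (sg N) * z"
  have u: "u \<noteq> 0" unfolding u_def using den_sg[OF N, of z] z by simp
  have "exp (of_real (ln (cc N)) - Ln u) = exp (of_real (ln (cc N))) / exp (Ln u)" by (rule exp_diff)
  also have "\<dots> = of_real (cc N) / u" using PD u by (simp only: exp_of_real exp_Ln exp_ln) simp
  also have "\<dots> = FF N z" unfolding FF_def kk_def u_def by simp
  finally show ?thesis unfolding u_def .
qed

lemma SF_f: "norm z < 1 \<Longrightarrow> spectral_factor (ff N) z = FF N z"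
proof -
  assume z: "norm z < 1"
  have "spectral_factor (ff N) z = exp (complex_of_real (1 / (4 * pi)) *
      (LINT t:{0..2*pi}|lborel. ((cis t + z)/(cis t - z)) * of_real (Re (hf (cis t)))))"
    unfolding spectral_factor_def lnff ..
  also have "\<dots> = exp (complex_of_real (1 / (4 * pi)) * (2*pi*hf z))"
    by (simp only: herglotz_LINT[OF hol_hf z hf0])
  also have "complex_of_real (1 / (4 * pi)) * (2*pi*hf z) = of_real (ln (cc N)) - Ln (1 - of_real (sg N) * z)"
    unfolding hf_def by (simp add: field_simps)
  also have "exp (of_real (ln (cc N)) - Ln (1 - of_real (sg N) * z)) = FF N z"
    by (rule expFF[OF z])
  finally show ?thesis .
qed

lemma SF_g: "norm z < 1 \<Longrightarrow> spectral_factor (gg N) z = GG N z"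
proof -
  assume z: "norm z < 1"
  have "spectral_factor (gg N) z = exp (complex_of_real (1 / (4 * pi)) *
      (LINT t:{0..2*pi}|lborel. ((cis t + z)/(cis t - z)) * of_real (Re (hg (cis t)))))"
    unfolding spectral_factor_def lngg ..
  also have "\<dots> = exp (complex_of_real (1 / (4 * pi)) * (2*pi*hg z))"
    by (simp only: herglotz_LINT[OF hol_hg z hg0])
  also have "complex_of_real (1 / (4 * pi)) * (2*pi*hg z) = (of_real (ln (cc N)) - Ln (1 - of_real (sg N) * z)) + \<i> * of_real pi * KK N z"
    unfolding hg_def hf_def by (simp add: field_simps)
  also have "exp ((of_real (ln (cc N)) - Ln (1 - of_real (sg N) * z)) + \<i> * of_real pi * KK N z) = GG N z"
    unfolding GG_def exp_add expFF[OF z] ..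
  finally show ?thesis .
qed

lemma cont_D: "continuous_on (cball 0 1) (\<lambda>z. GG N z - FF N z)"
  unfolding GG_def FF_def KK_def kk_def
  by (intro continuous_intros) (use den_sg[OF N] den_rho[OF N] in auto)

lemma BV: "boundary_value (\<lambda>z. spectral_factor (gg N) z - spectral_factor (ff N) z) t = GG N (cis t) - FF N (cis t)"
proof -
  have c: "continuous_on {0..1} (\<lambda>r::real. GG N (of_real r * cis t) - FF N (of_real r * cis t))"
    by (rule continuous_on_compose2[OF cont_D]) (auto intro!: continuous_intros simp: norm_mult)
  hence "((\<lambda>r::real. GG N (of_real r * cis t) - FF N (of_real r * cis t)) \<longlongrightarrow> GG N (of_real 1 * cis t) - FF N (of_real 1 * cis t)) (at 1 within {0..1})"
    unfolding continuous_on_def by (meson atLeastAtMost_iff order_refl zero_le_one)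
  hence "((\<lambda>r::real. GG N (of_real r * cis t) - FF N (of_real r * cis t)) \<longlongrightarrow> GG N (cis t) - FF N (cis t)) (at 1 within {0..1})"
    by simp
  hence l: "((\<lambda>r::real. GG N (of_real r * cis t) - FF N (of_real r * cis t)) \<longlongrightarrow> GG N (cis t) - FF N (cis t)) (at_left 1)"
    by (simp add: at_within_Icc_at_left)
  have ev: "eventually (\<lambda>r. spectral_factor (gg N) (of_real r * cis t) - spectral_factor (ff N) (of_real r * cis t)
      = GG N (of_real r * cis t) - FF N (of_real r * cis t)) (at_left (1::real))"
  proof -
    have "eventually (\<lambda>r. r \<in> {0<..<(1::real)}) (at_left 1)" by (rule eventually_at_left_real) simp
    thus ?thesis
    proof (rule eventually_mono)
      fix r :: real assume "r \<in> {0<..<1}"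
      hence "norm (of_real r * cis t) < 1" by (simp add: norm_mult)
      thus "spectral_factor (gg N) (of_real r * cis t) - spectral_factor (ff N) (of_real r * cis t)
      = GG N (of_real r * cis t) - FF N (of_real r * cis t)" by (simp add: SF_f SF_g)
    qed
  qed
  have "((\<lambda>r. spectral_factor (gg N) (of_real r * cis t) - spectral_factor (ff N) (of_real r * cis t)) \<longlongrightarrow> GG N (cis t) - FF N (cis t)) (at_left 1)"
    using l tendsto_cong[OF ev] by simp
  thus ?thesis unfolding boundary_value_def by (rule tendsto_Lim[OF trivial_limit_at_left_real])
qed

end



lemma main:
  assumes N: "N \<ge> 1"
  shows "admissible (ff N) \<and> admissible (gg N) \<and>
    L1_norm (ff N) \<le> 1 \<and> L1_norm (gg N) \<le> 1 \<and>
    L1_norm (\<lambda>z. gg N z - ff N z) \<le> 1 / N \<and>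
    L1_norm (\<lambda>z. ln (gg N z) - ln (ff N z)) \<le> 1 / N \<and>
    H2_norm (\<lambda>z. spectral_factor (gg N) z - spectral_factor (ff N) z) \<ge> 2 - 1 / N"
proof -
  note P = params[OF N]
  have adf: "admissible (ff N)"
    unfolding admissible_def L1_T_def
    by (intro conjI allI LINT_cont(1) cont_ff[OF N] cont_lnf[OF N] AE_I2 impI ff_pos[OF N]) (simp add: ff_def)
  have adg: "admissible (gg N)"
    unfolding admissible_def L1_T_def
    by (intro conjI allI LINT_cont(1) cont_gg[OF N] cont_lng[OF N] AE_I2 impI gg_pos[OF N]) (simp add: gg_def)
  have Lf: "L1_norm (ff N) = 1 - eta N"
  proof -
    have "L1_norm (ff N) = integral {-pi..pi} (\<lambda>t. \<bar>ff N (cis t)\<bar>)"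
      unfolding L1_norm_def by (intro LINT_cont(2) continuous_intros cont_ff[OF N])
    also have "(\<lambda>t. \<bar>ff N (cis t)\<bar>) = (\<lambda>t. ff N (cis t))" by (simp add: ff_def)
    also have "integral {-pi..pi} \<dots> = 1 - eta N" by (rule integral_unique[OF I_f[OF N]])
    finally show ?thesis .
  qed
  have Ldiff: "L1_norm (\<lambda>z. gg N z - ff N z) = integral {-pi..pi} (\<lambda>t. \<bar>gg N (cis t) - ff N (cis t)\<bar>)"
    unfolding L1_norm_def by (intro LINT_cont(2) continuous_intros cont_ff[OF N] cont_gg[OF N])
  have Lln: "L1_norm (\<lambda>z. ln (gg N z) - ln (ff N z)) = integral {-pi..pi} (\<lambda>t. \<bar>ln (gg N (cis t)) - ln (ff N (cis t))\<bar>)"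
    unfolding L1_norm_def by (intro LINT_cont(2) continuous_intros cont_lnf[OF N] cont_lng[OF N])
  have Lg: "L1_norm (gg N) \<le> 1"
  proof -
    have ci: "(\<lambda>t. \<bar>gg N (cis t) - ff N (cis t)\<bar>) integrable_on {-pi..pi}"
      by (intro integrable_continuous_interval continuous_intros cont_ff[OF N] cont_gg[OF N])
    have h: "((\<lambda>t. ff N (cis t) + \<bar>gg N (cis t) - ff N (cis t)\<bar>) has_integral
        (1 - eta N + integral {-pi..pi} (\<lambda>t. \<bar>gg N (cis t) - ff N (cis t)\<bar>))) {-pi..pi}"
      by (intro has_integral_add I_f[OF N] integrable_integral ci)
    have "L1_norm (gg N) = integral {-pi..pi} (\<lambda>t. \<bar>gg N (cis t)\<bar>)"
      unfolding L1_norm_def by (intro LINT_cont(2) continuous_intros cont_gg[OF N])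
    also have "\<dots> \<le> 1 - eta N + integral {-pi..pi} (\<lambda>t. \<bar>gg N (cis t) - ff N (cis t)\<bar>)"
      apply (rule int_upper[OF _ h])
      subgoal by (intro continuous_intros cont_gg[OF N])
      subgoal for t using gg_pos[OF N, of t] by simp
      done
    also have "\<dots> \<le> 1 - eta N + 1/(8*N)" using EB[OF N] by simp
    also have "\<dots> \<le> 1" unfolding eta_def using N by (simp add: field_simps)
    finally show ?thesis .
  qed
  have H: "H2_norm (\<lambda>z. spectral_factor (gg N) z - spectral_factor (ff N) z) \<ge> 2 - 1 / N"
  proof -
    have "H2_norm (\<lambda>z. spectral_factor (gg N) z - spectral_factor (ff N) z) =
        sqrt (LINT t:{-pi..pi}|lborel. (cmod (GG N (cis t) - FF N (cis t)))\<^sup>2)"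
      unfolding H2_norm_def BV[OF N] ..
    also have "(LINT t:{-pi..pi}|lborel. (cmod (GG N (cis t) - FF N (cis t)))\<^sup>2) =
        integral {-pi..pi} (\<lambda>t. (cmod (GG N (cis t) - FF N (cis t)))\<^sup>2)"
      by (intro LINT_cont(2) continuous_intros cont_FF[OF N] cont_GG[OF N])
    finally show ?thesis using ED[OF N] real_le_rsqrt by simp
  qed
  have "1/(8*N) \<le> 1/N" using N by (simp add: field_simps)
  thus ?thesis using adf adg Lf Lg Ldiff Lln EA[OF N] EB[OF N] H P by simp
qed

theorem theorem1:
  shows "\<exists>f g :: nat \<Rightarrow> complex \<Rightarrow> real. \<forall>n::nat. n \<ge> 1 \<longrightarrow>
    admissible (f n) \<and> admissible (g n) \<and>
    L1_norm (f n) \<le> 1 \<and> L1_norm (g n) \<le> 1 \<and>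
    L1_norm (\<lambda>z. g n z - f n z) \<le> 1 / real n \<and>
    L1_norm (\<lambda>z. ln (g n z) - ln (f n z)) \<le> 1 / real n \<and>
    H2_norm (\<lambda>z. spectral_factor (g n) z - spectral_factor (f n) z) \<ge> 2 - 1 / real n"
proof -
  have H: "\<forall>n::nat. n \<ge> 1 \<longrightarrow> admissible (ff (real n)) \<and> admissible (gg (real n)) \<and>
    L1_norm (ff (real n)) \<le> 1 \<and> L1_norm (gg (real n)) \<le> 1 \<and>
    L1_norm (\<lambda>z. gg (real n) z - ff (real n) z) \<le> 1 / real n \<and>
    L1_norm (\<lambda>z. ln (gg (real n) z) - ln (ff (real n) z)) \<le> 1 / real n \<and>
    H2_norm (\<lambda>z. spectral_factor (gg (real n)) z - spectral_factor (ff (real n)) z) \<ge> 2 - 1 / real n"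
  proof (intro allI impI)
    fix n :: nat assume "n \<ge> 1"
    hence "real n \<ge> 1" by simp
    from main[OF this] show "admissible (ff (real n)) \<and> admissible (gg (real n)) \<and>
    L1_norm (ff (real n)) \<le> 1 \<and> L1_norm (gg (real n)) \<le> 1 \<and>
    L1_norm (\<lambda>z. gg (real n) z - ff (real n) z) \<le> 1 / real n \<and>
    L1_norm (\<lambda>z. ln (gg (real n) z) - ln (ff (real n) z)) \<le> 1 / real n \<and>
    H2_norm (\<lambda>z. spectral_factor (gg (real n)) z - spectral_factor (ff (real n)) z) \<ge> 2 - 1 / real n" .
  qed
  show ?thesis by (rule exI[of _ "\<lambda>n. ff (real n)"], rule exI[of _ "\<lambda>n. gg (real n)"]) (use H in simp)
qed

end
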